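(* Let $S$ be a left amenable semigroup and let $X$ be a Banach space that is complemented in its bidual $X^{**}$ (i.e. there is a bounded linear projection from $X^{**}$ onto the canonical image of $X$). Then there exists an $X$-valued left invariant mean on $S$, i.e. a bounded linear map $M: B(S,X)\to X$ such that $M(x\chi_S)=x$ for all $x\in X$ and $M(f)=M(f_s)$ for all $f\in B(S,X)$ and $s\in S$.
   Context: $B(S,X)$ denotes the Banach space of all bounded functions $f:S\to X$ with the supremum norm; $x\chi_S$ denotes the function on $S$ identically equal to $x$; for $f$ defined on $S$ and $s\in S$, $f_s(t)=f(st)$ is the left translate. $S$ is left amenable if there is a left invariant mean on $\ell_\infty(S)$, i.e. a norm-one linear functional $m$ on $\ell_\infty(S)$ with $m(e)=1$ ($e$ the constant function $1$) and $m(f)=m(f_s)$ for all $f\in\ell_\infty(S)$, $s\in S$. *)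

theory Defs
  imports "HOL-Analysis.Analysis"
begin

text \<open>Elements of B(S,X): bounded functions S \<Rightarrow> X.  S is the (whole) type 'a.\<close>
definition bfun :: "('a \<Rightarrow> 'b::real_normed_vector) set" where
  "bfun = {f. bounded (range f)}"

definition supnorm :: "('a \<Rightarrow> 'b::real_normed_vector) \<Rightarrow> real" where
  "supnorm f = (SUP t. norm (f t))"

definition ltrans :: "('a::semigroup_mult \<Rightarrow> 'b) \<Rightarrow> 'a \<Rightarrow> ('a \<Rightarrow> 'b)" where
  "ltrans f s = (\<lambda>t. f (s * t))"

text \<open>M is a bounded linear map B(S,X) \<rightarrow> X (only its values on bfun matter).\<close>
definition bounded_linear_on_bfun :: "(('a \<Rightarrow> 'b::real_normed_vector) \<Rightarrow> 'c::real_normed_vector) \<Rightarrow> bool" where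
  "bounded_linear_on_bfun M \<longleftrightarrow>
     (\<forall>f\<in>bfun. \<forall>g\<in>bfun. M (\<lambda>t. f t + g t) = M f + M g) \<and>
     (\<forall>f\<in>bfun. \<forall>c. M (\<lambda>t. c *\<^sub>R f t) = c *\<^sub>R M f) \<and>
     (\<exists>K. \<forall>f\<in>bfun. norm (M f) \<le> K * supnorm f)"

text \<open>Left invariant mean on l_infinity(S): linear functional m with m(e) = 1,
  operator norm one (given m(e)=1, this is |m f| \<le> ||f||_\<infinity> for all f), and
  m(f) = m(f_s).\<close>
definition left_invariant_mean :: "(('a::semigroup_mult \<Rightarrow> real) \<Rightarrow> real) \<Rightarrow> bool" where
  "left_invariant_mean m \<longleftrightarrow>
     (\<forall>f\<in>bfun. \<forall>g\<in>bfun. m (\<lambda>t. f t + g t) = m f + m g) \<and>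
     (\<forall>f\<in>bfun. \<forall>c. m (\<lambda>t. c * f t) = c * m f) \<and>
     (\<forall>f\<in>bfun. \<bar>m f\<bar> \<le> supnorm f) \<and>
     m (\<lambda>t. 1) = 1 \<and>
     (\<forall>f\<in>bfun. \<forall>s. m (ltrans f s) = m f)"

definition left_amenable :: "'a::semigroup_mult itself \<Rightarrow> bool" where
  "left_amenable _ \<longleftrightarrow> (\<exists>m :: ('a \<Rightarrow> real) \<Rightarrow> real. left_invariant_mean m)"

definition canon :: "'b::real_normed_vector \<Rightarrow> (('b \<Rightarrow>\<^sub>L real) \<Rightarrow>\<^sub>L real)" where
  "canon x = Blinfun (\<lambda>\<phi>. blinfun_apply \<phi> x)"

definition complemented_in_bidual :: "'b::banach itself \<Rightarrow> bool" where
  "complemented_in_bidual _ \<longleftrightarrow>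
     (\<exists>Q :: ((('b \<Rightarrow>\<^sub>L real) \<Rightarrow>\<^sub>L real) \<Rightarrow>\<^sub>L (('b \<Rightarrow>\<^sub>L real) \<Rightarrow>\<^sub>L real)).
        (\<forall>u. blinfun_apply Q (blinfun_apply Q u) = blinfun_apply Q u) \<and> range (blinfun_apply Q) = range (canon :: 'b \<Rightarrow> _))"

lemma canon_apply: "blinfun_apply (canon x) \<phi> = blinfun_apply \<phi> x"
  unfolding canon_def by (simp add: bounded_linear_blinfun_apply bounded_linear_Blinfun_apply)

end

theory Submission imports Defs begin

definition lingraph :: "('b::real_normed_vector \<times> real) set \<Rightarrow> bool" where
 "lingraph G \<longleftrightarrow> (\<forall>a r b s c d. (a,r)\<in>G \<longrightarrow> (b,s)\<in>G \<longrightarrow> (c *\<^sub>R a + d *\<^sub>R b, c * r + d * s) \<in> G)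
    \<and> (\<forall>a r. (a,r)\<in>G \<longrightarrow> r \<le> norm a)"

lemma lingraph_lin: "lingraph G \<Longrightarrow> (a,r)\<in>G \<Longrightarrow> (b,s)\<in>G \<Longrightarrow> (c *\<^sub>R a + d *\<^sub>R b, c * r + d * s) \<in> G"
  unfolding lingraph_def by blast

lemma lingraph_le: "lingraph G \<Longrightarrow> (a,r)\<in>G \<Longrightarrow> r \<le> norm a"
  unfolding lingraph_def by blast

lemma lingraph_add: "lingraph G \<Longrightarrow> (a,r)\<in>G \<Longrightarrow> (b,s)\<in>G \<Longrightarrow> (a + b, r + s) \<in> G"
  using lingraph_lin[of G a r b s 1 1] by simp

lemma lingraph_scale: "lingraph G \<Longrightarrow> (a,r)\<in>G \<Longrightarrow> (c *\<^sub>R a, c * r) \<in> G"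
  using lingraph_lin[of G a r a r c 0] by simp

lemma lingraph_unique:
  assumes "lingraph G" "(a,r)\<in>G" "(a,s)\<in>G" shows "r = s"
proof -
  have "(0, r - s) \<in> G" using lingraph_lin[OF assms, of 1 "-1"] by simp
  then have "r - s \<le> 0" using lingraph_le[OF assms(1)] by fastforce
  moreover have "(0, s - r) \<in> G" using lingraph_lin[OF assms(1,3,2), of 1 "-1"] by simp
  then have "s - r \<le> 0" using lingraph_le[OF assms(1)] by fastforce
  ultimately show ?thesis by simp
qed

lemma lingraph_extend:
  assumes G: "lingraph G" and ne: "(a0,r0) \<in> G"
  shows "\<exists>\<alpha>. lingraph {(a + t *\<^sub>R y, r + t * \<alpha>) | a r t. (a,r)\<in>G}"
proof -
  define S where "S = {s - norm (b - y) | b s. (b,s)\<in>G}"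
  have bnd: "s - norm (b - y) \<le> norm (a + y) - r" if "(a,r)\<in>G" "(b,s)\<in>G" for a r b s
  proof -
    have "r + s \<le> norm (a + b)" using lingraph_le[OF G lingraph_add[OF G that]] .
    also have "norm (a + b) \<le> norm (a + y) + norm (b - y)"
      using norm_triangle_ineq[of "a + y" "b - y"] by simp
    finally show ?thesis by simp
  qed
  define \<alpha> where "\<alpha> = Sup S"
  have Sne: "S \<noteq> {}" using ne unfolding S_def by blast
  have Sbd: "bdd_above S" unfolding S_def bdd_above_def using bnd[OF ne] by blast
  have H1: "s - norm (b - y) \<le> \<alpha>" if "(b,s)\<in>G" for b s
    unfolding \<alpha>_def by (rule cSup_upper[OF _ Sbd]) (use that S_def in blast)
  have H2: "\<alpha> \<le> norm (a + y) - r" if "(a,r)\<in>G" for a r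
    unfolding \<alpha>_def by (rule cSup_least[OF Sne]) (use that bnd S_def in blast)
  let ?G = "{(a + t *\<^sub>R y, r + t * \<alpha>) | a r t. (a,r)\<in>G}"
  have dom: "r + t * \<alpha> \<le> norm (a + t *\<^sub>R y)" if "(a,r)\<in>G" for a r t
  proof (cases "t = 0")
    case True then show ?thesis using lingraph_le[OF G that] by simp
  next
    case False
    show ?thesis
    proof (cases "t > 0")
      case True
      have "((1/t) *\<^sub>R a, (1/t) * r) \<in> G" by (rule lingraph_scale[OF G that])
      from H2[OF this] have "\<alpha> \<le> norm ((1/t) *\<^sub>R a + y) - (1/t) * r" .
      then have "t * \<alpha> \<le> t * (norm ((1/t) *\<^sub>R a + y) - (1/t) * r)" using True by (simp add: mult_left_mono)
      then have "t * \<alpha> \<le> t * norm ((1/t) *\<^sub>R a + y) - r" using True by (simp add: right_diff_distrib)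
      also have "t * norm ((1/t) *\<^sub>R a + y) = norm (t *\<^sub>R ((1/t) *\<^sub>R a + y))" using True by simp
      also have "t *\<^sub>R ((1/t) *\<^sub>R a + y) = a + t *\<^sub>R y" using True by (simp add: scaleR_add_right)
      finally show ?thesis by simp
    next
      case neg: False
      define u where "u = - t"
      have u: "u > 0" using neg \<open>t \<noteq> 0\<close> u_def by simp
      have "((1/u) *\<^sub>R a, (1/u) * r) \<in> G" by (rule lingraph_scale[OF G that])
      from H1[OF this] have "(1/u) * r - norm ((1/u) *\<^sub>R a - y) \<le> \<alpha>" .
      then have "u * ((1/u) * r - norm ((1/u) *\<^sub>R a - y)) \<le> u * \<alpha>" using u by (simp add: mult_left_mono)
      then have "r - u * norm ((1/u) *\<^sub>R a - y) \<le> u * \<alpha>" using u by (simp add: right_diff_distrib)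
      also have "u * norm ((1/u) *\<^sub>R a - y) = norm (u *\<^sub>R ((1/u) *\<^sub>R a - y))" using u by simp
      also have "u *\<^sub>R ((1/u) *\<^sub>R a - y) = a + t *\<^sub>R y" using u by (simp add: scaleR_diff_right u_def)
      finally show ?thesis unfolding u_def by simp
    qed
  qed
  have "lingraph ?G"
    unfolding lingraph_def
  proof (intro conjI allI impI)
    fix p r q s c d
    assume "(p, r) \<in> ?G" "(q, s) \<in> ?G"
    then obtain a r1 t b s1 t' where ar: "(a,r1)\<in>G" "p = a + t *\<^sub>R y" "r = r1 + t * \<alpha>"
      and bs: "(b,s1)\<in>G" "q = b + t' *\<^sub>R y" "s = s1 + t' * \<alpha>" by blast
    have "(c *\<^sub>R a + d *\<^sub>R b, c * r1 + d * s1) \<in> G" by (rule lingraph_lin[OF G ar(1) bs(1)])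
    moreover have "c *\<^sub>R p + d *\<^sub>R q = (c *\<^sub>R a + d *\<^sub>R b) + (c*t + d*t') *\<^sub>R y"
      using ar bs by (simp add: algebra_simps)
    moreover have "c * r + d * s = (c * r1 + d * s1) + (c*t + d*t') * \<alpha>"
      using ar bs by (simp add: algebra_simps)
    ultimately show "(c *\<^sub>R p + d *\<^sub>R q, c * r + d * s) \<in> ?G" by blast
  next
    fix p r assume "(p, r) \<in> ?G"
    then show "r \<le> norm p" using dom by blast
  qed
  then show ?thesis by blast
qed

lemma mem_ext: "(a,r) \<in> M \<Longrightarrow> (a + t *\<^sub>R y, r + t * \<alpha>) \<in> {(a + t *\<^sub>R y, r + t * \<alpha>) | a r t. (a,r)\<in>M}"
  by blast

lemma hahn_banach_norming:
  fixes x :: "'b::real_normed_vector"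
  shows "\<exists>g. linear g \<and> (\<forall>a. \<bar>g a\<bar> \<le> norm a) \<and> g x = norm x"
proof -
  define A where "A = {G::('b \<times> real) set. lingraph G \<and> (x, norm x) \<in> G}"
  define G0 where "G0 = {(c *\<^sub>R x, c * norm x) | c. True}"
  have G0lin: "lingraph G0"
    unfolding lingraph_def
  proof (intro conjI allI impI)
    fix a r b s c d
    assume "(a, r) \<in> G0" "(b, s) \<in> G0"
    then obtain e f where "a = e *\<^sub>R x" "r = e * norm x" "b = f *\<^sub>R x" "s = f * norm x"
      unfolding G0_def by blast
    then have "c *\<^sub>R a + d *\<^sub>R b = (c*e + d*f) *\<^sub>R x" "c * r + d * s = (c*e+d*f) * norm x"
      by (simp_all add: algebra_simps)
    then show "(c *\<^sub>R a + d *\<^sub>R b, c * r + d * s) \<in> G0" unfolding G0_def by blast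
  next
    fix a r assume "(a, r) \<in> G0"
    then obtain e where "a = e *\<^sub>R x" "r = e * norm x" unfolding G0_def by blast
    then show "r \<le> norm a" by (simp add: mult_right_mono)
  qed
  have "(1 *\<^sub>R x, 1 * norm x) \<in> G0" unfolding G0_def by blast
  then have "(x, norm x) \<in> G0" by simp
  then have G0: "G0 \<in> A" using G0lin A_def by blast
  have "\<forall>C\<in>chains A. \<exists>U\<in>A. \<forall>X\<in>C. X \<subseteq> U"
  proof
    fix C assume C: "C \<in> chains A"
    show "\<exists>U\<in>A. \<forall>X\<in>C. X \<subseteq> U"
    proof (cases "C = {}")
      case True then show ?thesis using G0 by blast
    next
      case False
      have CA: "C \<subseteq> A" and ch: "\<forall>X\<in>C. \<forall>Y\<in>C. X \<subseteq> Y \<or> Y \<subseteq> X"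
        using C unfolding chains_def chain_subset_def by auto
      have "\<Union>C \<in> A"
        unfolding A_def lingraph_def
      proof (intro CollectI conjI allI impI)
        fix a r b s c d assume "(a, r) \<in> \<Union>C" "(b, s) \<in> \<Union>C"
        then obtain X Y where XY: "X \<in> C" "Y \<in> C" "(a,r) \<in> X" "(b,s) \<in> Y" by blast
        then consider "X \<subseteq> Y" | "Y \<subseteq> X" using ch by blast
        then show "(c *\<^sub>R a + d *\<^sub>R b, c * r + d * s) \<in> \<Union>C"
        proof cases
          case 1
          have "lingraph Y" using XY CA A_def by blast
          then show ?thesis using lingraph_lin[of Y a r b s c d] 1 XY by blast
        next
          case 2
          have "lingraph X" using XY CA A_def by blast
          then show ?thesis using lingraph_lin[of X a r b s c d] 2 XY by blast
        qed
      next
        fix a r assume "(a, r) \<in> \<Union>C"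
        then obtain X where "X \<in> C" "(a,r) \<in> X" by blast
        then show "r \<le> norm a" using CA A_def lingraph_le by blast
      next
        obtain X where "X \<in> C" using False by blast
        then show "(x, norm x) \<in> \<Union>C" using CA A_def by blast
      qed
      then show ?thesis by blast
    qed
  qed
  from Zorn_Lemma2[OF this] obtain M where MA: "M \<in> A" and max: "\<forall>X\<in>A. M \<subseteq> X \<longrightarrow> X = M"
    by blast
  have LM: "lingraph M" and xM: "(x, norm x) \<in> M" using MA A_def by auto
  have tot: "\<exists>r. (y, r) \<in> M" for y
  proof (rule ccontr)
    assume ny: "\<not> (\<exists>r. (y, r) \<in> M)"
    from lingraph_extend[OF LM xM, of y] obtain \<alpha> where
      L': "lingraph {(a + t *\<^sub>R y, r + t * \<alpha>) | a r t. (a,r)\<in>M}" by blast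
    define G' where "G' = {(a + t *\<^sub>R y, r + t * \<alpha>) | a r t. (a,r)\<in>M}"
    have memG: "(a + t *\<^sub>R y, r + t * \<alpha>) \<in> G'" if "(a,r) \<in> M" for a r t
      unfolding G'_def using that by (rule mem_ext)
    have sub: "M \<subseteq> G'"
    proof
      fix p assume "p \<in> M"
      obtain a r where p: "p = (a, r)" by (cases p)
      have "(a, r) \<in> M" using \<open>p \<in> M\<close> p by simp
      from memG[OF this, of 0] show "p \<in> G'" using p by simp
    qed
    have "(x, norm x) \<in> G'" using sub xM by (rule subsetD)
    then have "G' \<in> A" using L' unfolding A_def G'_def[symmetric] by simp
    then have eq: "G' = M" using max sub by blast
    have "(0::'b, 0::real) \<in> M" using lingraph_scale[OF LM xM, of 0] by simp
    from memG[OF this, of 1] have "(y, \<alpha>) \<in> G'" by simp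
    then have "(y, \<alpha>) \<in> M" using eq by simp
    then show False using ny by blast
  qed
  define g where "g a = (SOME r. (a, r) \<in> M)" for a
  have gM: "(a, g a) \<in> M" for a unfolding g_def using tot by (rule someI_ex)
  have gadd: "g (a + b) = g a + g b" for a b
    using lingraph_unique[OF LM gM lingraph_add[OF LM gM gM]] .
  have gscale: "g (c *\<^sub>R a) = c *\<^sub>R g a" for c a
    using lingraph_unique[OF LM gM lingraph_scale[OF LM gM]] by simp
  have lin: "linear g" by (rule linearI[OF gadd gscale])
  have "\<bar>g a\<bar> \<le> norm a" for a
  proof -
    have "g a \<le> norm a" using lingraph_le[OF LM gM] .
    moreover have "g (-a) \<le> norm (-a)" using lingraph_le[OF LM gM] .
    moreover have "g (-a) = - g a" using gscale[of "-1" a] by simp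
    ultimately show ?thesis by simp
  qed
  moreover have "g x = norm x" using lingraph_unique[OF LM gM xM] .
  ultimately show ?thesis using lin by blast
qed


lemma hb_blinfun:
  fixes x :: "'b::real_normed_vector"
  shows "\<exists>\<phi>::'b \<Rightarrow>\<^sub>L real. norm \<phi> \<le> 1 \<and> blinfun_apply \<phi> x = norm x"
proof -
  obtain g where g: "linear g" "\<And>a. \<bar>g a\<bar> \<le> norm a" "g x = norm x"
    using hahn_banach_norming[of x] by blast
  have bl: "bounded_linear g"
  proof (rule bounded_linear_intro[where K=1])
    show "g (a + b) = g a + g b" for a b using g(1) by (simp add: linear_add)
    show "g (r *\<^sub>R a) = r *\<^sub>R g a" for r a using g(1) by (simp add: linear_scale)
    show "norm (g a) \<le> norm a * 1" for a using g(2)[of a] by simp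
  qed
  have ap: "blinfun_apply (Blinfun g) = g" using bl by (rule bounded_linear_Blinfun_apply)
  have "norm (Blinfun g) \<le> 1"
    by (rule norm_blinfun_bound) (use g(2) ap in simp_all)
  then show ?thesis using ap g(3) by metis
qed

lemma canon_add: "canon (a + b) = canon a + canon b"
  by (rule blinfun_eqI) (simp add: canon_apply blinfun.add_left blinfun.add_right)

lemma canon_scale: "canon (c *\<^sub>R a) = c *\<^sub>R canon a"
  by (rule blinfun_eqI) (simp add: canon_apply blinfun.scaleR_left blinfun.scaleR_right)

lemma canon_inj:
  fixes x y :: "'b::real_normed_vector"
  assumes "canon x = canon y" shows "x = y"
proof -
  obtain \<phi> :: "'b \<Rightarrow>\<^sub>L real" where "blinfun_apply \<phi> (x - y) = norm (x - y)"
    using hb_blinfun by blast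
  moreover have "blinfun_apply \<phi> x = blinfun_apply \<phi> y"
    using arg_cong[OF assms, of "\<lambda>u. blinfun_apply u \<phi>"] by (simp add: canon_apply)
  ultimately have "norm (x - y) = 0" by (simp add: blinfun.diff_right)
  then show ?thesis by simp
qed

lemma norm_le_canon:
  fixes x :: "'b::real_normed_vector"
  shows "norm x \<le> norm (canon x)"
proof -
  obtain \<phi> :: "'b \<Rightarrow>\<^sub>L real" where \<phi>: "norm \<phi> \<le> 1" "blinfun_apply \<phi> x = norm x"
    using hb_blinfun by blast
  have "norm x = norm (blinfun_apply (canon x) \<phi>)" using \<phi> by (simp add: canon_apply)
  also have "\<dots> \<le> norm (canon x) * norm \<phi>" by (rule norm_blinfun)
  also have "\<dots> \<le> norm (canon x) * 1" using \<phi> by (simp add: mult_left_le)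
  finally show ?thesis by simp
qed

lemma bfun_iff: "f \<in> bfun \<longleftrightarrow> (\<exists>B. \<forall>t. norm (f t) \<le> B)"
  unfolding bfun_def bounded_iff by auto

lemma bfun_comp: "f \<in> bfun \<Longrightarrow> (\<lambda>t. blinfun_apply \<phi> (f t)) \<in> bfun"
proof -
  assume "f \<in> bfun"
  then obtain B where B: "\<And>t. norm (f t) \<le> B" by (auto simp: bfun_iff)
  have "norm (blinfun_apply \<phi> (f t)) \<le> norm \<phi> * B" for t
    using norm_blinfun[of \<phi> "f t"] B[of t] by (meson mult_left_mono norm_ge_zero order_trans)
  then show ?thesis by (auto simp: bfun_iff)
qed

lemma bfun_add: "f \<in> bfun \<Longrightarrow> g \<in> bfun \<Longrightarrow> (\<lambda>t. f t + g t) \<in> bfun"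
proof -
  assume "f \<in> bfun" "g \<in> bfun"
  then obtain B C where B: "\<And>t. norm (f t) \<le> B" and C: "\<And>t. norm (g t) \<le> C" by (auto simp: bfun_iff)
  have "norm (f t + g t) \<le> B + C" for t using norm_triangle_ineq[of "f t" "g t"] B[of t] C[of t] by simp
  then show ?thesis by (auto simp: bfun_iff)
qed

lemma bfun_scale: "f \<in> bfun \<Longrightarrow> (\<lambda>t. c *\<^sub>R f t) \<in> bfun"
proof -
  assume "f \<in> bfun"
  then obtain B where B: "\<And>t. norm (f t) \<le> B" by (auto simp: bfun_iff)
  have "norm (c *\<^sub>R f t) \<le> \<bar>c\<bar> * B" for t using B[of t] by (simp add: mult_left_mono)
  then show ?thesis by (auto simp: bfun_iff)
qed

lemma bfun_const: "(\<lambda>t. x) \<in> bfun" by (auto simp: bfun_iff)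

lemma bfun_ltrans: "f \<in> bfun \<Longrightarrow> ltrans f s \<in> bfun"
  by (auto simp: bfun_iff ltrans_def)

lemma supnorm_upper: "f \<in> bfun \<Longrightarrow> norm (f t) \<le> supnorm f"
  unfolding supnorm_def bfun_def
  by (rule cSUP_upper) (auto simp: bounded_iff bdd_above_def)

lemma supnorm_nonneg: "f \<in> bfun \<Longrightarrow> 0 \<le> supnorm f"
  using supnorm_upper[of f undefined] norm_ge_zero order_trans by blast

lemma supnorm_comp: "f \<in> bfun \<Longrightarrow> supnorm (\<lambda>t. blinfun_apply \<phi> (f t)) \<le> norm \<phi> * supnorm f"
  unfolding supnorm_def[of "\<lambda>t. blinfun_apply \<phi> (f t)"]
proof (rule cSUP_least)
  fix t assume "f \<in> bfun"
  have "norm (blinfun_apply \<phi> (f t)) \<le> norm \<phi> * norm (f t)" by (rule norm_blinfun)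
  also have "\<dots> \<le> norm \<phi> * supnorm f" using supnorm_upper[OF \<open>f \<in> bfun\<close>] by (simp add: mult_left_mono)
  finally show "norm (blinfun_apply \<phi> (f t)) \<le> norm \<phi> * supnorm f" .
qed simp


theorem proposition1:
  assumes "left_amenable TYPE('a::semigroup_mult)"
    and "complemented_in_bidual TYPE('b::banach)"
  shows "\<exists>M :: ('a \<Rightarrow> 'b) \<Rightarrow> 'b.
           bounded_linear_on_bfun M \<and>
           (\<forall>x. M (\<lambda>t. x) = x) \<and>
           (\<forall>f\<in>bfun. \<forall>s. M (ltrans f s) = M f)"
proof -
  obtain m :: "('a \<Rightarrow> real) \<Rightarrow> real" where m: "left_invariant_mean m"
    using assms(1) unfolding left_amenable_def by blast
  have madd: "m (\<lambda>t. f t + g t) = m f + m g" if "f \<in> bfun" "g \<in> bfun" for f g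
    using m that unfolding left_invariant_mean_def by blast
  have mscale: "m (\<lambda>t. c * f t) = c * m f" if "f \<in> bfun" for f c
    using m that unfolding left_invariant_mean_def by blast
  have mbound: "\<bar>m f\<bar> \<le> supnorm f" if "f \<in> bfun" for f
    using m that unfolding left_invariant_mean_def by blast
  have mone: "m (\<lambda>t. 1) = 1" using m unfolding left_invariant_mean_def by blast
  have minv: "m (ltrans f s) = m f" if "f \<in> bfun" for f s
    using m that unfolding left_invariant_mean_def by blast
  have mconst: "m (\<lambda>t. c) = c" for c
    using mscale[OF bfun_const[of 1], of c] mone by simp
  obtain Q :: "(('b \<Rightarrow>\<^sub>L real) \<Rightarrow>\<^sub>L real) \<Rightarrow>\<^sub>L (('b \<Rightarrow>\<^sub>L real) \<Rightarrow>\<^sub>L real)"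
    where Qid: "\<And>u. blinfun_apply Q (blinfun_apply Q u) = blinfun_apply Q u"
      and Qr: "range (blinfun_apply Q) = range (canon :: 'b \<Rightarrow> _)"
    using assms(2) unfolding complemented_in_bidual_def by blast
  define U where "U f = Blinfun (\<lambda>\<phi>::'b \<Rightarrow>\<^sub>L real. m (\<lambda>t. blinfun_apply \<phi> (f t)))" for f :: "'a \<Rightarrow> 'b"
  have Uap: "blinfun_apply (U f) \<phi> = m (\<lambda>t. blinfun_apply \<phi> (f t))" if f: "f \<in> bfun" for f \<phi>
  proof -
    have "bounded_linear (\<lambda>\<phi>::'b \<Rightarrow>\<^sub>L real. m (\<lambda>t. blinfun_apply \<phi> (f t)))"
    proof (rule bounded_linear_intro[where K="supnorm f"])
      fix \<phi> \<psi> :: "'b \<Rightarrow>\<^sub>L real"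
      show "m (\<lambda>t. blinfun_apply (\<phi> + \<psi>) (f t)) = m (\<lambda>t. blinfun_apply \<phi> (f t)) + m (\<lambda>t. blinfun_apply \<psi> (f t))"
        using madd[OF bfun_comp[OF f] bfun_comp[OF f]] by (simp add: blinfun.add_left)
    next
      fix r and \<phi> :: "'b \<Rightarrow>\<^sub>L real"
      show "m (\<lambda>t. blinfun_apply (r *\<^sub>R \<phi>) (f t)) = r *\<^sub>R m (\<lambda>t. blinfun_apply \<phi> (f t))"
        using mscale[OF bfun_comp[OF f]] by (simp add: blinfun.scaleR_left)
    next
      fix \<phi> :: "'b \<Rightarrow>\<^sub>L real"
      have "\<bar>m (\<lambda>t. blinfun_apply \<phi> (f t))\<bar> \<le> supnorm (\<lambda>t. blinfun_apply \<phi> (f t))"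
        by (rule mbound[OF bfun_comp[OF f]])
      also have "\<dots> \<le> norm \<phi> * supnorm f" by (rule supnorm_comp[OF f])
      finally show "norm (m (\<lambda>t. blinfun_apply \<phi> (f t))) \<le> norm \<phi> * supnorm f" by simp
    qed
    then show ?thesis unfolding U_def by (simp add: bounded_linear_Blinfun_apply)
  qed
  have Unorm: "norm (U f) \<le> supnorm f" if f: "f \<in> bfun" for f
  proof (rule norm_blinfun_bound[OF supnorm_nonneg[OF f]])
    fix \<phi> :: "'b \<Rightarrow>\<^sub>L real"
    have "\<bar>m (\<lambda>t. blinfun_apply \<phi> (f t))\<bar> \<le> supnorm (\<lambda>t. blinfun_apply \<phi> (f t))"
      by (rule mbound[OF bfun_comp[OF f]])
    also have "\<dots> \<le> norm \<phi> * supnorm f" by (rule supnorm_comp[OF f])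
    finally show "norm (blinfun_apply (U f) \<phi>) \<le> supnorm f * norm \<phi>"
      using Uap[OF f] by (simp add: mult.commute)
  qed
  define M where "M f = (SOME x. canon x = blinfun_apply Q (U f))" for f :: "'a \<Rightarrow> 'b"
  have Mspec: "canon (M f) = blinfun_apply Q (U f)" for f
  proof -
    have "blinfun_apply Q (U f) \<in> range canon" using Qr by blast
    then have "\<exists>x. canon x = blinfun_apply Q (U f)" by auto
    then show ?thesis unfolding M_def by (rule someI_ex)
  qed
  have Madd: "M (\<lambda>t. f t + g t) = M f + M g" if f: "f \<in> bfun" and g: "g \<in> bfun" for f g
  proof -
    have "U (\<lambda>t. f t + g t) = U f + U g"
    proof (rule blinfun_eqI)
      fix \<phi> :: "'b \<Rightarrow>\<^sub>L real"
      show "blinfun_apply (U (\<lambda>t. f t + g t)) \<phi> = blinfun_apply (U f + U g) \<phi>"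
        using Uap[OF bfun_add[OF f g]] Uap[OF f] Uap[OF g] madd[OF bfun_comp[OF f] bfun_comp[OF g]]
        by (simp add: blinfun.add_right blinfun.add_left)
    qed
    then have "canon (M (\<lambda>t. f t + g t)) = canon (M f + M g)"
      by (simp add: Mspec canon_add blinfun.add_right)
    then show ?thesis by (rule canon_inj)
  qed
  have Mscale: "M (\<lambda>t. c *\<^sub>R f t) = c *\<^sub>R M f" if f: "f \<in> bfun" for f c
  proof -
    have "U (\<lambda>t. c *\<^sub>R f t) = c *\<^sub>R U f"
    proof (rule blinfun_eqI)
      fix \<phi> :: "'b \<Rightarrow>\<^sub>L real"
      show "blinfun_apply (U (\<lambda>t. c *\<^sub>R f t)) \<phi> = blinfun_apply (c *\<^sub>R U f) \<phi>"
        using Uap[OF bfun_scale[OF f]] Uap[OF f] mscale[OF bfun_comp[OF f]]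
        by (simp add: blinfun.scaleR_right blinfun.scaleR_left)
    qed
    then have "canon (M (\<lambda>t. c *\<^sub>R f t)) = canon (c *\<^sub>R M f)"
      by (simp add: Mspec canon_scale blinfun.scaleR_right)
    then show ?thesis by (rule canon_inj)
  qed
  have Mbound: "norm (M f) \<le> norm Q * supnorm f" if f: "f \<in> bfun" for f
  proof -
    have "norm (M f) \<le> norm (canon (M f))" by (rule norm_le_canon)
    also have "\<dots> = norm (blinfun_apply Q (U f))" by (simp add: Mspec)
    also have "\<dots> \<le> norm Q * norm (U f)" by (rule norm_blinfun)
    also have "\<dots> \<le> norm Q * supnorm f" by (rule mult_left_mono[OF Unorm[OF f] norm_ge_zero])
    finally show ?thesis .
  qed
  have Mconst: "M (\<lambda>t. x) = x" for x
  proof -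
    have "U (\<lambda>t. x) = canon x"
      by (rule blinfun_eqI) (simp add: Uap[OF bfun_const] mconst canon_apply)
    moreover obtain v where "canon x = blinfun_apply Q v" using Qr by (metis rangeE rangeI)
    ultimately have "canon (M (\<lambda>t. x)) = canon x" by (simp add: Mspec Qid)
    then show ?thesis by (rule canon_inj)
  qed
  have Minv: "M (ltrans f s) = M f" if f: "f \<in> bfun" for f s
  proof -
    have "U (ltrans f s) = U f"
    proof (rule blinfun_eqI)
      fix \<phi> :: "'b \<Rightarrow>\<^sub>L real"
      have "(\<lambda>t. blinfun_apply \<phi> (ltrans f s t)) = ltrans (\<lambda>t. blinfun_apply \<phi> (f t)) s"
        by (simp add: ltrans_def)
      then show "blinfun_apply (U (ltrans f s)) \<phi> = blinfun_apply (U f) \<phi>"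
        using Uap[OF bfun_ltrans[OF f]] Uap[OF f] minv[OF bfun_comp[OF f]] by simp
    qed
    then have "canon (M (ltrans f s)) = canon (M f)" by (simp add: Mspec)
    then show ?thesis by (rule canon_inj)
  qed
  have "bounded_linear_on_bfun M"
    unfolding bounded_linear_on_bfun_def using Madd Mscale Mbound by blast
  then show ?thesis using Mconst Minv by blast
qed

end
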